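(* For every $\alpha,\beta>1$ and $\varepsilon>0$: (a) there is an instance with $N=C$ and an outcome that satisfies $\alpha$-proportional fairness but not $(\alpha+1-\varepsilon)$-individual fairness; (b) there is an instance with $N=C$ and an outcome that satisfies $\beta$-individual fairness but not $(\beta+1-\varepsilon)$-proportional fairness; (c) there is an instance with $N\subseteq C$ and an outcome that satisfies $\beta$-individual fairness but not $(2\beta-\varepsilon)$-proportional fairness.
   Context: Let $(\mathcal X,d)$ be a metric space, $N=[n]$ a set of agents and $C$ a set of candidates located in $\mathcal X$, $k\in\mathbb N^+$; an outcome is $W\subseteq C$ with $|W|\le k$; $B(i,r)=\{x\in\mathcal X:d(i,x)\le r\}$; $d(i,W)=\min_{c\in W}d(i,c)$. $\alpha$-proportional fairness: there is no group $N'\subseteq N$ with $|N'|\ge n/k$ and candidate $c\in C\setminus W$ such that $\alpha\, d(i,c)<d(i,W)$ for all $i\in N'$. $\beta$-individual fairness (for instances with $N\subseteq C$): $d(i,W)\le\beta\, r(i)$ for all $i\in N$, where $r(i)=\min\{r\in\mathbb R: |B(i,r)\cap N|\ge n/k\}$. *)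

theory Defs
  imports "HOL-Library.Extended_Real"
begin

text \<open>Points of an instance live in an arbitrary metric d on a countable carrier (nat);
every finite instance embeds isometrically into such a space.\<close>

definition is_metric :: "(nat \<Rightarrow> nat \<Rightarrow> real) \<Rightarrow> bool" where
  "is_metric d \<longleftrightarrow> (\<forall>x y. d x y = 0 \<longleftrightarrow> x = y) \<and> (\<forall>x y. d x y = d y x)
     \<and> (\<forall>x y z. d x z \<le> d x y + d y z)"

definition is_instance :: "nat set \<Rightarrow> nat set \<Rightarrow> nat \<Rightarrow> bool" where
  "is_instance N C k \<longleftrightarrow> finite N \<and> N \<noteq> {} \<and> finite C \<and> k > 0"

definition outcome :: "nat set \<Rightarrow> nat \<Rightarrow> nat set \<Rightarrow> bool" where
  "outcome C k W \<longleftrightarrow> W \<subseteq> C \<and> card W \<le> k"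

text \<open>d(i,W) = min over W; +\<infinity> for empty W.\<close>
definition distW :: "(nat \<Rightarrow> nat \<Rightarrow> real) \<Rightarrow> nat \<Rightarrow> nat set \<Rightarrow> ereal" where
  "distW d i W = (INF c\<in>W. ereal (d i c))"

definition prop_fair :: "(nat \<Rightarrow> nat \<Rightarrow> real) \<Rightarrow> nat set \<Rightarrow> nat set \<Rightarrow> nat \<Rightarrow> real \<Rightarrow> nat set \<Rightarrow> bool" where
  "prop_fair d N C k \<alpha> W \<longleftrightarrow>
     \<not> (\<exists>N' \<subseteq> N. real (card N') \<ge> real (card N) / real k \<and>
          (\<exists>c \<in> C - W. \<forall>i \<in> N'. ereal (\<alpha> * d i c) < distW d i W))"

definition fair_radius :: "(nat \<Rightarrow> nat \<Rightarrow> real) \<Rightarrow> nat set \<Rightarrow> nat \<Rightarrow> nat \<Rightarrow> real" where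
  "fair_radius d N k i = (LEAST r::real. real (card {j \<in> N. d i j \<le> r}) \<ge> real (card N) / real k)"

definition ind_fair :: "(nat \<Rightarrow> nat \<Rightarrow> real) \<Rightarrow> nat set \<Rightarrow> nat \<Rightarrow> real \<Rightarrow> nat set \<Rightarrow> bool" where
  "ind_fair d N k \<beta> W \<longleftrightarrow> (\<forall>i \<in> N. distW d i W \<le> ereal (\<beta> * fair_radius d N k i))"

end

theory Submission
  imports Defs
begin

definition tab :: "real \<Rightarrow> real \<Rightarrow> real \<Rightarrow> real \<Rightarrow> real \<Rightarrow> real \<Rightarrow> nat \<Rightarrow> nat \<Rightarrow> real" where
  "tab p01 p02 p03 p12 p13 p23 x y = (let a = min x y; b = max x y in
     if a = 0 \<and> b = 1 then p01 else if a = 0 \<and> b = 2 then p02 else if a = 0 \<and> b = 3 then p03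
     else if a = 1 \<and> b = 2 then p12 else if a = 1 \<and> b = 3 then p13 else p23)"

definition ext :: "(nat \<Rightarrow> nat \<Rightarrow> real) \<Rightarrow> real \<Rightarrow> nat \<Rightarrow> nat \<Rightarrow> real" where
  "ext t M x y = (if x = y then 0 else if x < 4 \<and> y < 4 then t x y else M)"

lemma lt4: "(x::nat) < 4 \<Longrightarrow> x = 0 \<or> x = 1 \<or> x = 2 \<or> x = 3" by auto

lemma ext_metric:
  assumes "p01>0" "p02>0" "p03>0" "p12>0" "p13>0" "p23>0"
   "p01 \<le> M" "p02 \<le> M" "p03 \<le> M" "p12 \<le> M" "p13 \<le> M" "p23 \<le> M"
   "p01 \<le> p02+p12" "p02 \<le> p01+p12" "p12 \<le> p01+p02"
   "p01 \<le> p03+p13" "p03 \<le> p01+p13" "p13 \<le> p01+p03"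
   "p02 \<le> p03+p23" "p03 \<le> p02+p23" "p23 \<le> p02+p03"
   "p12 \<le> p13+p23" "p13 \<le> p12+p23" "p23 \<le> p12+p13"
  shows "is_metric (ext (tab p01 p02 p03 p12 p13 p23) M)"
proof -
  let ?d = "ext (tab p01 p02 p03 p12 p13 p23) M"
  have pos: "x \<noteq> y \<Longrightarrow> ?d x y > 0" for x y
    using assms(1-12) by (auto simp: ext_def tab_def Let_def)
  have nn: "?d x y \<ge> 0" for x y
    using pos[of x y] by (cases "x = y") (auto simp: ext_def)
  have sym: "?d x y = ?d y x" for x y
    by (auto simp: ext_def tab_def Let_def min_def max_def)
  have tri: "?d x z \<le> ?d x y + ?d y z" for x y z
  proof (cases "x = z \<or> x = y \<or> y = z")
    case True thus ?thesis using nn[of x y] nn[of y z] by (auto simp: ext_def)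
  next
    case False
    show ?thesis
    proof (cases "x < 4 \<and> y < 4 \<and> z < 4")
      case True
      then have "x = 0 \<or> x = 1 \<or> x = 2 \<or> x = 3" "y = 0 \<or> y = 1 \<or> y = 2 \<or> y = 3"
        "z = 0 \<or> z = 1 \<or> z = 2 \<or> z = 3" by auto
      then show ?thesis using False assms(13-24)
        by (elim disjE) (simp_all add: ext_def tab_def Let_def)
    next
      case F2: False
      have "tab p01 p02 p03 p12 p13 p23 x z \<le> M"
        using assms(7-12) by (auto simp: tab_def Let_def)
      then show ?thesis using F2 False nn[of x y] nn[of y z]
        by (auto simp: ext_def)
    qed
  qed
  have z0: "?d x y = 0 \<longleftrightarrow> x = y" for x y
    using pos[of x y] by (cases "x = y") (auto simp: ext_def)
  show ?thesis unfolding is_metric_def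
  proof (intro conjI allI)
    fix x y show "(?d x y = 0) = (x = y)" by (rule z0)
  next
    fix x y show "?d x y = ?d y x" by (rule sym)
  next
    fix x y z show "?d x z \<le> ?d x y + ?d y z" by (rule tri)
  qed
qed

lemma fr_char:
  assumes "finite N" "N \<noteq> {}" "k > 0"
  shows "real (card N) / real k \<le> real (card {j\<in>N. d i j \<le> fair_radius d N k i}) \<and>
    (\<forall>y. real (card N) / real k \<le> real (card {j\<in>N. d i j \<le> y}) \<longrightarrow> fair_radius d N k i \<le> y)"
proof -
  define P where "P = (\<lambda>r. real (card N) / real k \<le> real (card {j\<in>N. d i j \<le> r}))"
  define S where "S = (\<lambda>j. d i j) ` N \<inter> {r. P r}"
  define m where "m = Max ((\<lambda>j. d i j) ` N)"
  have fin: "finite S" using assms(1) by (simp add: S_def)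
  have "{j\<in>N. d i j \<le> m} = N" using assms(1) by (auto simp: m_def)
  moreover have "real (card N) / real k \<le> real (card N)"
    using assms(3) by (simp add: divide_le_eq mult_le_cancel_left1)
  ultimately have "P m" by (simp add: P_def)
  moreover have "m \<in> (\<lambda>j. d i j) ` N" using assms(1,2) by (simp add: m_def)
  ultimately have Sne: "S \<noteq> {}" by (auto simp: S_def)
  define r0 where "r0 = Min S"
  have r0S: "r0 \<in> S" using fin Sne by (simp add: r0_def)
  have least: "r0 \<le> y" if "P y" for y
  proof -
    define T where "T = {j\<in>N. d i j \<le> y}"
    have "real (card N) / real k > 0" using assms by (simp add: card_gt_0_iff)
    then have "card T > 0" using that by (simp add: P_def T_def)
    then have Tne: "T \<noteq> {}" and Tfin: "finite T" by (auto simp: card_gt_0_iff)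
    define m' where "m' = Max ((\<lambda>j. d i j) ` T)"
    have m'y: "m' \<le> y" using Tne Tfin by (auto simp: m'_def T_def)
    have "{j\<in>N. d i j \<le> m'} = T"
    proof
      show "{j \<in> N. d i j \<le> m'} \<subseteq> T" using m'y by (auto simp: T_def)
      show "T \<subseteq> {j \<in> N. d i j \<le> m'}" using Tfin by (auto simp: m'_def T_def)
    qed
    then have "P m'" using that by (simp add: P_def T_def)
    moreover have "m' \<in> (\<lambda>j. d i j) ` N" using Tne Tfin unfolding m'_def
      by (metis (no_types, lifting) Max_in T_def finite_imageI image_is_empty image_mono mem_Collect_eq subsetI subsetD)
    ultimately have "m' \<in> S" by (simp add: S_def)
    then have "r0 \<le> m'" using fin by (simp add: r0_def)
    then show ?thesis using m'y by simp
  qed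
  have "fair_radius d N k i = r0"
    unfolding fair_radius_def
    apply (rule Least_equality)
    using r0S least by (auto simp: S_def P_def)
  then show ?thesis using r0S least by (auto simp: S_def P_def)
qed

lemma fr_le:
  assumes "finite N" "N \<noteq> {}" "k > 0" "real (card N) / real k \<le> real (card {j\<in>N. d i j \<le> a})"
  shows "fair_radius d N k i \<le> a"
  using fr_char[OF assms(1-3)] assms(4) by blast

lemma fr_ge:
  assumes "finite N" "N \<noteq> {}" "k > 0" "\<And>y. y < a \<Longrightarrow> real (card {j\<in>N. d i j \<le> y}) < real (card N) / real k"
  shows "a \<le> fair_radius d N k i"
  using fr_char[OF assms(1-3), of d i] assms(4)[of "fair_radius d N k i"] by fastforce

lemma distW_single: "distW d i {a} = ereal (d i a)"
  by (simp add: distW_def)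

lemma distW_insert: "distW d i (insert a W) = min (ereal (d i a)) (distW d i W)"
  by (simp add: distW_def inf_min)

lemma partA:
  fixes \<alpha> \<epsilon> :: real
  assumes "\<alpha> > 1" "\<epsilon> > 0"
  shows "\<exists>d N C k W. is_metric d \<and> is_instance N C k \<and> N = C \<and> outcome C k W \<and>
            prop_fair d N C k \<alpha> W \<and> \<not> ind_fair d N k (\<alpha> + 1 - \<epsilon>) W"
proof -
  define d where "d = ext (tab 1 1 (\<alpha>+1) 2 \<alpha> \<alpha>) (\<alpha>+1)"
  define N :: "nat set" where "N = {0,1,2,3,4}"
  define W :: "nat set" where "W = {3,4}"
  have met: "is_metric d" unfolding d_def by (rule ext_metric) (use assms in auto)
  have inst: "is_instance N N 2" by (simp add: is_instance_def N_def)
  have outc: "outcome N 2 W" by (simp add: outcome_def N_def W_def)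
  have cN: "card N = 5" by (simp add: N_def)
  have dW: "distW d i W = min (ereal (d i 3)) (ereal (d i 4))" for i
    unfolding W_def distW_insert[of _ _ 3] distW_single ..
  have "\<alpha>*(\<alpha>+1) > 0" "\<alpha>*\<alpha> > 0" using assms by (intro mult_pos_pos; simp)+
  then have pos: "\<not> \<alpha>*(\<alpha>+1) < 0" "\<not> \<alpha>*\<alpha> < 0" by auto
  have pf: "prop_fair d N N 2 \<alpha> W"
    unfolding prop_fair_def
  proof
    assume "\<exists>N'\<subseteq>N. real (card N) / real 2 \<le> real (card N') \<and>
          (\<exists>c\<in>N - W. \<forall>i\<in>N'. ereal (\<alpha> * d i c) < distW d i W)"
    then obtain N' c where N': "N' \<subseteq> N" "real (card N) / real 2 \<le> real (card N')"
      and c: "c \<in> N - W" and dev: "\<forall>i\<in>N'. ereal (\<alpha> * d i c) < distW d i W" by blast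
    have c3: "c = 0 \<or> c = 1 \<or> c = 2" using c by (auto simp: N_def W_def)
    have "3 \<notin> N'"
    proof
      assume "3 \<in> N'"
      then have "ereal (\<alpha> * d 3 c) < distW d 3 W" using dev by blast
      then show False using c3 assms by (simp only: dW) (auto simp: d_def ext_def tab_def pos)
    qed
    moreover have "4 \<notin> N'"
    proof
      assume "4 \<in> N'"
      then have "ereal (\<alpha> * d 4 c) < distW d 4 W" using dev by blast
      then show False using c3 assms by (simp only: dW) (auto simp: d_def ext_def tab_def pos)
    qed
    ultimately have sub: "N' \<subseteq> {0,1,2}" using N'(1) by (auto simp: N_def)
    have "card N' \<ge> 3" using N'(2) cN by simp
    then have c3': "3 \<le> card N'" .
    have in1: "1 \<in> N'"
    proof (rule ccontr)
      assume "1 \<notin> N'"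
      then have "N' \<subseteq> {0,2}" using sub by auto
      then have "card N' \<le> card {0::nat,2}" by (rule card_mono[rotated]) simp
      then show False using c3' by simp
    qed
    have in2: "2 \<in> N'"
    proof (rule ccontr)
      assume "2 \<notin> N'"
      then have "N' \<subseteq> {0,1}" using sub by auto
      then have "card N' \<le> card {0::nat,1}" by (rule card_mono[rotated]) simp
      then show False using c3' by simp
    qed
    have "ereal (\<alpha> * d 1 c) < distW d 1 W" "ereal (\<alpha> * d 2 c) < distW d 2 W" using dev in1 in2 by auto
    then show False using c3 assms by (simp only: dW) (auto simp: d_def ext_def tab_def Let_def)
  qed
  have r0: "fair_radius d N 2 0 = 1"
  proof (rule antisym)
    show "fair_radius d N 2 0 \<le> 1"
    proof (rule fr_le)
      have "{0,1,2} \<subseteq> {j\<in>N. d 0 j \<le> 1}" by (auto simp: N_def d_def ext_def tab_def)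
      then have "card {0::nat,1,2} \<le> card {j\<in>N. d 0 j \<le> 1}" by (rule card_mono[rotated]) (simp add: N_def)
      then show "real (card N) / real 2 \<le> real (card {j\<in>N. d 0 j \<le> 1})" using cN by simp
    qed (auto simp: N_def)
    show "1 \<le> fair_radius d N 2 0"
    proof (rule fr_ge)
      fix y :: real assume "y < 1"
      then have "{j\<in>N. d 0 j \<le> y} \<subseteq> {0}" using assms by (auto simp: N_def d_def ext_def tab_def)
      then have "card {j\<in>N. d 0 j \<le> y} \<le> card {0::nat}" by (rule card_mono[rotated]) simp
      then show "real (card {j\<in>N. d 0 j \<le> y}) < real (card N) / real 2" using cN by simp
    qed (auto simp: N_def)
  qed
  have "\<not> ind_fair d N 2 (\<alpha> + 1 - \<epsilon>) W"
    unfolding ind_fair_def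
  proof
    assume h: "\<forall>i\<in>N. distW d i W \<le> ereal ((\<alpha> + 1 - \<epsilon>) * fair_radius d N 2 i)"
    have "0 \<in> N" by (simp add: N_def)
    with h have "distW d 0 W \<le> ereal ((\<alpha> + 1 - \<epsilon>) * fair_radius d N 2 0)" by blast
    moreover have "distW d 0 W = ereal (\<alpha> + 1)" by (simp only: dW) (simp add: d_def ext_def tab_def)
    ultimately show False using r0 assms by simp
  qed
  then show ?thesis using met inst outc pf by blast
qed

lemma partB:
  fixes \<beta> \<epsilon> :: real
  assumes "\<beta> > 1" "\<epsilon> > 0"
  shows "\<exists>d N C k W. is_metric d \<and> is_instance N C k \<and> N = C \<and> outcome C k W \<and>
            ind_fair d N k \<beta> W \<and> \<not> prop_fair d N C k (\<beta> + 1 - \<epsilon>) W"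
proof -
  define d where "d = ext (tab 1 1 \<beta> 2 (\<beta>+1) (\<beta>+1)) (\<beta>+1)"
  define N :: "nat set" where "N = {0,1,2,3,4}"
  define W :: "nat set" where "W = {3,4}"
  have met: "is_metric d" unfolding d_def by (rule ext_metric) (use assms in auto)
  have inst: "is_instance N N 2" by (simp add: is_instance_def N_def)
  have outc: "outcome N 2 W" by (simp add: outcome_def N_def W_def)
  have cN: "card N = 5" by (simp add: N_def)
  have dW: "distW d i W = min (ereal (d i 3)) (ereal (d i 4))" for i
    unfolding W_def distW_insert[of _ _ 3] distW_single ..
  have nn: "d x y \<ge> 0" for x y 
  proof -
    have "d x x \<le> d x y + d y x" "d x x = 0" "d y x = d x y" using met unfolding is_metric_def by blast+
    then show ?thesis by linarith
  qed
  have rnn: "0 \<le> fair_radius d N 2 i" for i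
  proof (rule fr_ge)
    fix y :: real assume "y < 0"
    then have e: "{j\<in>N. d i j \<le> y} = {}" using nn by (auto simp: not_le intro: less_le_trans)
    show "real (card {j\<in>N. d i j \<le> y}) < real (card N) / real 2" unfolding e using cN by simp
  qed (auto simp: N_def)
  have r0: "1 \<le> fair_radius d N 2 0"
  proof (rule fr_ge)
    fix y :: real assume "y < 1"
    then have "{j\<in>N. d 0 j \<le> y} \<subseteq> {0}" using assms by (auto simp: N_def d_def ext_def tab_def)
    then have "card {j\<in>N. d 0 j \<le> y} \<le> card {0::nat}" by (rule card_mono[rotated]) simp
    then show "real (card {j\<in>N. d 0 j \<le> y}) < real (card N) / real 2" using cN by simp
  qed (auto simp: N_def)
  have r1: "2 \<le> fair_radius d N 2 1"
  proof (rule fr_ge)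
    fix y :: real assume "y < 2"
    then have "{j\<in>N. d 1 j \<le> y} \<subseteq> {0,1}" using assms by (auto simp: N_def d_def ext_def tab_def)
    then have "card {j\<in>N. d 1 j \<le> y} \<le> card {0::nat,1}" by (rule card_mono[rotated]) simp
    then show "real (card {j\<in>N. d 1 j \<le> y}) < real (card N) / real 2" using cN by simp
  qed (auto simp: N_def)
  have r2: "2 \<le> fair_radius d N 2 2"
  proof (rule fr_ge)
    fix y :: real assume "y < 2"
    then have "{j\<in>N. d 2 j \<le> y} \<subseteq> {0,2}" using assms by (auto simp: N_def d_def ext_def tab_def)
    then have "card {j\<in>N. d 2 j \<le> y} \<le> card {0::nat,2}" by (rule card_mono[rotated]) simp
    then show "real (card {j\<in>N. d 2 j \<le> y}) < real (card N) / real 2" using cN by simp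
  qed (auto simp: N_def)
  have b0: "\<beta> \<le> \<beta> * fair_radius d N 2 0" using r0 assms by simp
  have "\<beta> * 2 \<le> \<beta> * fair_radius d N 2 1" using r1 assms by (intro mult_left_mono) auto
  then have b1: "\<beta> + 1 \<le> \<beta> * fair_radius d N 2 1" using assms by linarith
  have "\<beta> * 2 \<le> \<beta> * fair_radius d N 2 2" using r2 assms by (intro mult_left_mono) auto
  then have b2: "\<beta> + 1 \<le> \<beta> * fair_radius d N 2 2" using assms by linarith
  have w0: "distW d 0 W = ereal \<beta>" "distW d 1 W = ereal (\<beta>+1)" "distW d 2 W = ereal (\<beta>+1)"
    "distW d 3 W = 0" "distW d 4 W = 0"
    using assms by (simp_all only: dW) (simp_all add: d_def ext_def tab_def zero_ereal_def)
  have b3: "0 \<le> \<beta> * fair_radius d N 2 i" for i using rnn[of i] assms by simp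
  have "ind_fair d N 2 \<beta> W"
    unfolding ind_fair_def
  proof
    fix i assume "i \<in> N" then have "i=0 \<or> i=1 \<or> i=2 \<or> i=3 \<or> i=4" by (auto simp add: N_def)
    then show "distW d i W \<le> ereal (\<beta> * fair_radius d N 2 i)"
      using b0 b1 b2 b3[of 3] b3[of 4] by (elim disjE) (simp_all only: w0 ereal_less_eq zero_ereal_def)
  qed
  moreover have "\<not> prop_fair d N N 2 (\<beta> + 1 - \<epsilon>) W"
    unfolding prop_fair_def
  proof (simp only: not_not, intro exI conjI bexI ballI)
    show "{0,1,2} \<subseteq> N" by (simp add: N_def)
    show "real (card N) / real 2 \<le> real (card {0::nat,1,2})" using cN by simp
    show "0 \<in> N - W" by (simp add: N_def W_def)
    fix i assume "i \<in> {0::nat,1,2}"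
    then show "ereal ((\<beta> + 1 - \<epsilon>) * d i 0) < distW d i W"
      using assms by (simp only: dW) (auto simp: d_def ext_def tab_def)
  qed
  ultimately show ?thesis using met inst outc by blast
qed

lemma partC:
  fixes \<beta> \<epsilon> :: real
  assumes "\<beta> > 1" "\<epsilon> > 0"
  shows "\<exists>d N C k W. is_metric d \<and> is_instance N C k \<and> N \<subseteq> C \<and> outcome C k W \<and>
            ind_fair d N k \<beta> W \<and> \<not> prop_fair d N C k (2 * \<beta> - \<epsilon>) W"
proof -
  define d where "d = ext (tab 2 (2*\<beta>) 1 (2*\<beta>) 1 (2*\<beta>-1)) (2*\<beta>)"
  define N :: "nat set" where "N = {0,1,2}"
  define C :: "nat set" where "C = {0,1,2,3}"
  define W :: "nat set" where "W = {2}"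
  have met: "is_metric d" unfolding d_def by (rule ext_metric) (use assms in auto)
  have inst: "is_instance N C 2" by (simp add: is_instance_def N_def C_def)
  have outc: "outcome C 2 W" by (simp add: outcome_def C_def W_def)
  have sub: "N \<subseteq> C" by (auto simp: N_def C_def)
  have cN: "card N = 3" by (simp add: N_def)
  have dW: "distW d i W = ereal (d i 2)" for i
    unfolding W_def distW_single ..
  have nn: "d x y \<ge> 0" for x y 
  proof -
    have "d x x \<le> d x y + d y x" "d x x = 0" "d y x = d x y" using met unfolding is_metric_def by blast+
    then show ?thesis by linarith
  qed
  have rnn: "0 \<le> fair_radius d N 2 i" for i
  proof (rule fr_ge)
    fix y :: real assume "y < 0"
    then have e: "{j\<in>N. d i j \<le> y} = {}" using nn by (auto simp: not_le intro: less_le_trans)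
    show "real (card {j\<in>N. d i j \<le> y}) < real (card N) / real 2" unfolding e using cN by simp
  qed (auto simp: N_def)
  have r0: "2 \<le> fair_radius d N 2 0"
  proof (rule fr_ge)
    fix y :: real assume "y < 2"
    then have "{j\<in>N. d 0 j \<le> y} \<subseteq> {0}" using assms by (auto simp: N_def d_def ext_def tab_def)
    then have "card {j\<in>N. d 0 j \<le> y} \<le> card {0::nat}" by (rule card_mono[rotated]) simp
    then show "real (card {j\<in>N. d 0 j \<le> y}) < real (card N) / real 2" using cN by simp
  qed (auto simp: N_def)
  have r1: "2 \<le> fair_radius d N 2 1"
  proof (rule fr_ge)
    fix y :: real assume "y < 2"
    then have "{j\<in>N. d 1 j \<le> y} \<subseteq> {1}" using assms by (auto simp: N_def d_def ext_def tab_def)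
    then have "card {j\<in>N. d 1 j \<le> y} \<le> card {1::nat}" by (rule card_mono[rotated]) simp
    then show "real (card {j\<in>N. d 1 j \<le> y}) < real (card N) / real 2" using cN by simp
  qed (auto simp: N_def)
  have "\<beta> * 2 \<le> \<beta> * fair_radius d N 2 0" using r0 assms by (intro mult_left_mono) auto
  then have b0: "2 * \<beta> \<le> \<beta> * fair_radius d N 2 0" by linarith
  have "\<beta> * 2 \<le> \<beta> * fair_radius d N 2 1" using r1 assms by (intro mult_left_mono) auto
  then have b1: "2 * \<beta> \<le> \<beta> * fair_radius d N 2 1" by linarith
  have w0: "distW d 0 W = ereal (2*\<beta>)" "distW d 1 W = ereal (2*\<beta>)" "distW d 2 W = 0"
    using assms by (simp_all only: dW) (simp_all add: d_def ext_def tab_def zero_ereal_def)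
  have b3: "0 \<le> \<beta> * fair_radius d N 2 i" for i using rnn[of i] assms by simp
  have "ind_fair d N 2 \<beta> W"
    unfolding ind_fair_def
  proof
    fix i assume "i \<in> N" then have "i=0 \<or> i=1 \<or> i=2" by (auto simp add: N_def)
    then show "distW d i W \<le> ereal (\<beta> * fair_radius d N 2 i)"
      using b0 b1 b3[of 2] by (elim disjE) (simp_all only: w0 ereal_less_eq zero_ereal_def)
  qed
  moreover have "\<not> prop_fair d N C 2 (2 * \<beta> - \<epsilon>) W"
    unfolding prop_fair_def
  proof (simp only: not_not, intro exI conjI bexI ballI)
    show "{0,1} \<subseteq> N" by (simp add: N_def)
    show "real (card N) / real 2 \<le> real (card {0::nat,1})" using cN by simp
    show "3 \<in> C - W" by (simp add: C_def W_def)
    fix i assume "i \<in> {0::nat,1}"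
    then show "ereal ((2 * \<beta> - \<epsilon>) * d i 3) < distW d i W"
      using assms by (simp only: dW) (auto simp: d_def ext_def tab_def)
  qed
  ultimately show ?thesis using met inst outc sub by blast
qed

theorem theorem2:
  fixes \<alpha> \<beta> \<epsilon> :: real
  assumes "\<alpha> > 1" and "\<beta> > 1" and "\<epsilon> > 0"
  shows "(\<exists>d N C k W. is_metric d \<and> is_instance N C k \<and> N = C \<and> outcome C k W \<and>
            prop_fair d N C k \<alpha> W \<and> \<not> ind_fair d N k (\<alpha> + 1 - \<epsilon>) W)
       \<and> (\<exists>d N C k W. is_metric d \<and> is_instance N C k \<and> N = C \<and> outcome C k W \<and>
            ind_fair d N k \<beta> W \<and> \<not> prop_fair d N C k (\<beta> + 1 - \<epsilon>) W)
       \<and> (\<exists>d N C k W. is_metric d \<and> is_instance N C k \<and> N \<subseteq> C \<and> outcome C k W \<and>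
            ind_fair d N k \<beta> W \<and> \<not> prop_fair d N C k (2 * \<beta> - \<epsilon>) W)"
  using partA[OF assms(1,3)] partB[OF assms(2,3)] partC[OF assms(2,3)] by (intro conjI)

end
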